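(* Let $1\le p<\infty$ and $-n/p\le\gamma\le1$ with $\gamma\ne0$. Assume the semigroup $\{e^{-t\mathcal L}\}_{t>0}$ has a kernel $\mathcal P_t(x,y)$ satisfying the Gaussian upper bound, and that for every $t>0$, $e^{-t\mathcal L}(\mathbf 1)(x)=1$ (i.e. $\int_{\mathbb R^n}\mathcal P_t(x,y)\,dy=1$) for almost every $x\in\mathbb R^n$. Then there is a constant $C>0$ such that for every $f\in\mathcal C^{p,\gamma}(\mathbb R^n)$, $$\sup_{\mathcal B}\frac{1}{m(\mathcal B)^{\gamma/n}}\Big(\frac1{m(\mathcal B)}\int_{\mathcal B}|f(x)-e^{-t_{\mathcal B}\mathcal L}f(x)|^p\,dx\Big)^{1/p}\le C\|f\|_{\mathcal C^{p,\gamma}},$$ i.e. $\|f\|_{\mathcal C^{p,\gamma}_{\mathcal L}}\le C\|f\|_{\mathcal C^{p,\gamma}}$.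
   Context: Gaussian upper bound: there are constants $C,A>0$ with $|\mathcal P_t(x,y)|\le C t^{-n/2}e^{-A|x-y|^2/t}$ for all $x,y$, $t>0$, and $e^{-t\mathcal L}f(x)=\int\mathcal P_t(x,y)f(y)\,dy$. For a ball $\mathcal B$ of radius $r_{\mathcal B}$, $t_{\mathcal B}=r_{\mathcal B}^2$. For $1\le p<\infty$, $-n/p\le\gamma\le 1$, the Morrey–Campanato space $\mathcal C^{p,\gamma}(\mathbb R^n)$ consists of locally integrable $f$ with $\|f\|_{\mathcal C^{p,\gamma}}=\sup_{\mathcal B}m(\mathcal B)^{-\gamma/n}\big(\frac1{m(\mathcal B)}\int_{\mathcal B}|f-f_{\mathcal B}|^p\big)^{1/p}<\infty$, where $f_{\mathcal B}=\frac1{m(\mathcal B)}\int_{\mathcal B}f$ and the sup is over all balls. The quantity $\|f\|_{\mathcal C^{p,\gamma}_{\mathcal L}}$ is the supremum displayed in the claim (the space $\mathcal C^{p,\gamma}_{\mathcal L}$ consists of $f$ with $\int|f(x)|^p(1+|x|)^{-n-\varrho}dx<\infty$ for some small $\varrho>0$ and finite such norm). *)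

theory Defs
  imports "HOL-Analysis.Analysis"
begin

text \<open>Lebesgue measure of a set (balls in R^n = 'a::euclidean_space, n = DIM('a)).\<close>
definition mleb :: "'a::euclidean_space set \<Rightarrow> real" where
  "mleb B = measure lborel B"

definition balls :: "'a::euclidean_space set set" where
  "balls = {ball x r | x r. r > 0}"

definition avg :: "('a::euclidean_space \<Rightarrow> real) \<Rightarrow> 'a set \<Rightarrow> real" where
  "avg f B = (1 / mleb B) * (\<integral>x\<in>B. f x \<partial>lborel)"

definition enn_root :: "real \<Rightarrow> ennreal \<Rightarrow> ennreal" where
  "enn_root p v = (if v = top then top else ennreal (enn2real v powr (1 / p)))"

definition locally_integrable :: "('a::euclidean_space \<Rightarrow> real) \<Rightarrow> bool" where
  "locally_integrable f \<longleftrightarrow> (\<forall>K. compact K \<longrightarrow> set_integrable lborel K f)"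

definition campanato_norm :: "real \<Rightarrow> real \<Rightarrow> ('a::euclidean_space \<Rightarrow> real) \<Rightarrow> ennreal" where
  "campanato_norm p \<gamma> f =
     (SUP B \<in> balls. ennreal (mleb B powr (- \<gamma> / DIM('a))) *
        enn_root p (ennreal (1 / mleb B) * (\<integral>\<^sup>+ x\<in>B. ennreal (\<bar>f x - avg f B\<bar> powr p) \<partial>lborel)))"

definition Campanato :: "real \<Rightarrow> real \<Rightarrow> ('a::euclidean_space \<Rightarrow> real) set" where
  "Campanato p \<gamma> = {f. locally_integrable f \<and> campanato_norm p \<gamma> f < top}"

text \<open>The semigroup e^{-tL} given by its kernel P t x y.\<close>
definition heat :: "(real \<Rightarrow> 'a::euclidean_space \<Rightarrow> 'a \<Rightarrow> real) \<Rightarrow> real \<Rightarrow> ('a \<Rightarrow> real) \<Rightarrow> 'a \<Rightarrow> real" where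
  "heat P t f x = (\<integral>y. P t x y * f y \<partial>lborel)"

definition tB :: "'a::euclidean_space set \<Rightarrow> real" where
  "tB B = (THE s. \<exists>x r. r > 0 \<and> B = ball x r \<and> s = r\<^sup>2)"

definition campanato_L_norm :: "(real \<Rightarrow> 'a::euclidean_space \<Rightarrow> 'a \<Rightarrow> real) \<Rightarrow> real \<Rightarrow> real \<Rightarrow> ('a \<Rightarrow> real) \<Rightarrow> ennreal" where
  "campanato_L_norm P p \<gamma> f =
     (SUP B \<in> balls. ennreal (mleb B powr (- \<gamma> / DIM('a))) *
        enn_root p (ennreal (1 / mleb B) *
           (\<integral>\<^sup>+ x\<in>B. ennreal (\<bar>f x - heat P (tB B) f x\<bar> powr p) \<partial>lborel)))"

end

theory Submission
  imports Defs
begin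


lemma mleb_ball: "r \<ge> 0 \<Longrightarrow> mleb (ball (c::'a::euclidean_space) r) = unit_ball_vol (DIM('a)) * r ^ DIM('a)"
  unfolding mleb_def measure_def by (simp add: emeasure_ball)

lemma mleb_ball_pos: "r > 0 \<Longrightarrow> mleb (ball (c::'a::euclidean_space) r) > 0"
  by (simp add: mleb_ball)

lemma tB_ball: "r > 0 \<Longrightarrow> tB (ball (c::'a::euclidean_space) r) = r\<^sup>2"
  unfolding tB_def
  by (rule the_equality) (auto simp: ball_eq_ball_iff)

lemma ball_in_balls: "r > 0 \<Longrightarrow> ball (c::'a::euclidean_space) r \<in> balls"
  unfolding balls_def by blast

lemma mleb_ball_powr:
  assumes "r > 0"
  shows "mleb (ball (c::'a::euclidean_space) r) powr a
      = unit_ball_vol (DIM('a)) powr a * r powr (a * DIM('a))"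
proof -
  have "mleb (ball c r) powr a = unit_ball_vol (DIM('a)) powr a * (r ^ DIM('a)) powr a"
    using assms by (simp add: mleb_ball powr_mult)
  also have "(r ^ DIM('a)) powr a = r powr (a * DIM('a))"
    using assms by (simp add: powr_realpow[symmetric] powr_powr mult.commute)
  finally show ?thesis .
qed

lemma exp_neg_bound:
  fixes x :: real and m :: nat
  assumes "x > 0" "m > 0"
  shows "exp (- x) \<le> real m ^ m / x ^ m"
proof -
  have "(1 + x / real m) ^ m \<le> exp x"
    using assms by (intro exp_ge_one_plus_x_over_n_power_n) auto
  moreover have "(x / real m) ^ m \<le> (1 + x / real m) ^ m"
    using assms by (intro power_mono) auto
  ultimately have "x ^ m / real m ^ m \<le> exp x" by (simp add: power_divide)
  hence "1 / exp x \<le> real m ^ m / x ^ m"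
    using assms by (simp add: field_simps)
  thus ?thesis by (simp add: exp_minus field_simps)
qed

lemma young_pt:
  fixes u l p :: real
  assumes "u \<ge> 0" "l > 0" "p \<ge> 1"
  shows "u \<le> l powr (1 - p) * u powr p / p + l * (1 - 1/p)"
proof (cases "p = 1")
  case True thus ?thesis using assms by simp
next
  case False
  hence p: "p > 1" using assms by simp
  define q where "q = p / (p - 1)"
  have q: "q > 1" "1/p + 1/q = 1" using p by (auto simp: q_def field_simps)
  have "(u / l) * 1 \<le> (u/l) powr p / p + 1 powr q / q"
    using assms p q by (intro Youngs_inequality) auto
  hence "u / l \<le> (u/l) powr p / p + (1 - 1/p)" using q by simp
  hence "l * (u / l) \<le> l * ((u/l) powr p / p + (1 - 1/p))"
    using assms by (intro mult_left_mono) auto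
  also have "(u/l) powr p = u powr p * l powr (-p)"
    using assms by (simp add: powr_divide powr_minus_divide)
  also have "l * (u powr p * l powr (-p) / p + (1 - 1/p)) = l powr (1 - p) * u powr p / p + l * (1 - 1/p)"
    using assms by (simp add: powr_diff powr_minus field_simps)
  finally show ?thesis using assms by simp
qed

lemma powr_sum_le:
  fixes a b p :: real
  assumes "a \<ge> 0" "b \<ge> 0" "p > 0"
  shows "(a + b) powr p \<le> 2 powr p * (a powr p + b powr p)"
proof -
  have "(a + b) powr p \<le> (2 * max a b) powr p"
    using assms by (intro powr_mono2) auto
  also have "\<dots> = 2 powr p * max a b powr p" using assms by (simp add: powr_mult)
  also have "max a b powr p \<le> a powr p + b powr p"
    using assms by (auto simp: max_def)
  hence "2 powr p * max a b powr p \<le> 2 powr p * (a powr p + b powr p)" by simp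
  finally show ?thesis .
qed



lemma li_meas:
  assumes "locally_integrable (f::'a::euclidean_space \<Rightarrow> real)"
  shows "f \<in> borel_measurable lborel"
proof -
  have m: "(\<lambda>x. indicator (cball 0 (real k)) x *\<^sub>R f x) \<in> borel_measurable lborel" for k
  proof -
    have "integrable lborel (\<lambda>x. indicator (cball 0 (real k)) x *\<^sub>R f x)"
      using assms compact_cball unfolding locally_integrable_def set_integrable_def by blast
    thus ?thesis by (rule borel_measurable_integrable)
  qed
  have "(\<lambda>k. indicator (cball 0 (real k)) x *\<^sub>R f x) \<longlonglongrightarrow> f x" for x
  proof (rule tendsto_eventually)
    obtain k0 :: nat where "norm x \<le> real k0" using real_arch_simple by blast
    then show "\<forall>\<^sub>F k in sequentially. indicator (cball 0 (real k)) x *\<^sub>R f x = f x"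
      unfolding eventually_sequentially
      by (intro exI[of _ k0]) (auto simp: indicator_def dist_norm)
  qed
  then show ?thesis by (rule borel_measurable_LIMSEQ_real[OF _ m])
qed

lemma li_ball:
  assumes "locally_integrable (f::'a::euclidean_space \<Rightarrow> real)"
  shows "set_integrable lborel (ball c r) f"
proof (rule set_integrable_subset)
  show "set_integrable lborel (cball c r) f" using assms compact_cball unfolding locally_integrable_def by blast
qed auto

lemma CL_p:
  fixes f :: "'a::euclidean_space \<Rightarrow> real" and c :: 'a
  assumes N: "campanato_norm p \<gamma> f \<le> ennreal M" and M: "M \<ge> 0"
    and r: "r > 0" and p: "p \<ge> 1"
  defines "E \<equiv> ball c r"
  shows "(\<integral>\<^sup>+x\<in>E. ennreal (\<bar>f x - avg f E\<bar> powr p) \<partial>lborel)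
          \<le> ennreal (mleb E * (M * mleb E powr (\<gamma> / DIM('a))) powr p)"
proof -
  define I where "I = (\<integral>\<^sup>+x\<in>E. ennreal (\<bar>f x - avg f E\<bar> powr p) \<partial>lborel)"
  define mE where "mE = mleb E"
  have mE: "mE > 0" unfolding mE_def E_def using r by (rule mleb_ball_pos)
  have "E \<in> balls" unfolding E_def using r by (rule ball_in_balls)
  hence T: "ennreal (mE powr (- \<gamma> / DIM('a))) * enn_root p (ennreal (1 / mE) * I) \<le> ennreal M"
    using N unfolding campanato_norm_def I_def mE_def
    by (meson SUP_upper order_trans)
  have pos: "mE powr (- \<gamma> / DIM('a)) > 0" using mE by simp
  show ?thesis
  proof (cases "I = top")
    case True
    hence "ennreal (1 / mE) * I = top" using mE by (simp add: ennreal_mult_top)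
    hence "enn_root p (ennreal (1 / mE) * I) = top" by (simp add: enn_root_def)
    hence "ennreal (mE powr (- \<gamma> / DIM('a))) * enn_root p (ennreal (1 / mE) * I) = top"
      using pos by (simp add: ennreal_mult_top)
    with T have "top \<le> ennreal M" by simp
    thus ?thesis by (simp add: top_unique)
  next
    case False
    then obtain i where i: "I = ennreal i" "i \<ge> 0"
      by (cases I rule: ennreal_cases) auto
    have "ennreal (1 / mE) * I = ennreal (i / mE)" using i mE
      by (simp add: ennreal_mult''[symmetric] divide_inverse mult.commute)
    hence "enn_root p (ennreal (1 / mE) * I) = ennreal ((i / mE) powr (1/p))"
      using i mE by (simp add: enn_root_def)
    with T have "ennreal (mE powr (- \<gamma> / DIM('a)) * (i / mE) powr (1/p)) \<le> ennreal M"
      using pos by (simp add: ennreal_mult''[symmetric])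
    hence "mE powr (- \<gamma> / DIM('a)) * (i / mE) powr (1/p) \<le> M"
      using M by (simp add: ennreal_le_iff)
    hence "(i / mE) powr (1/p) \<le> M * mE powr (\<gamma> / DIM('a))"
      using pos mE by (simp add: powr_minus field_simps)
    hence "((i / mE) powr (1/p)) powr p \<le> (M * mE powr (\<gamma> / DIM('a))) powr p"
      using p by (intro powr_mono2) auto
    hence "i / mE \<le> (M * mE powr (\<gamma> / DIM('a))) powr p"
      using p i mE by (simp add: powr_powr)
    hence "i \<le> mE * (M * mE powr (\<gamma> / DIM('a))) powr p"
      using mE by (simp add: field_simps)
    thus ?thesis using i unfolding I_def mE_def by simp
  qed
qed



lemma emeasure_ball_mleb: "r \<ge> 0 \<Longrightarrow> emeasure lborel (ball (c::'a::euclidean_space) r) = ennreal (mleb (ball c r))"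
  by (simp add: emeasure_ball mleb_ball)

lemma CL_1:
  fixes f :: "'a::euclidean_space \<Rightarrow> real" and c :: 'a
  assumes N: "campanato_norm p \<gamma> f \<le> ennreal M" and M: "M \<ge> 0"
    and r: "r > 0" and p: "p \<ge> 1" and fm: "f \<in> borel_measurable lborel"
  defines "E \<equiv> ball c r"
  shows "(\<integral>\<^sup>+x\<in>E. ennreal \<bar>f x - avg f E\<bar> \<partial>lborel)
          \<le> ennreal (mleb E * (M * mleb E powr (\<gamma> / DIM('a))))"
proof -
  define mE where "mE = mleb E"
  define a where "a = avg f E"
  define l0 where "l0 = M * mE powr (\<gamma> / DIM('a))"
  have mE: "mE > 0" unfolding mE_def E_def using r by (rule mleb_ball_pos)
  have l0: "l0 \<ge> 0" unfolding l0_def using M by simp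
  have Ip: "(\<integral>\<^sup>+x\<in>E. ennreal (\<bar>f x - a\<bar> powr p) \<partial>lborel) \<le> ennreal (mE * l0 powr p)"
    using CL_p[OF N M r p, of c] unfolding E_def a_def mE_def l0_def by simp
  have emE: "emeasure lborel E = ennreal mE" unfolding E_def mE_def using r by (simp add: emeasure_ball_mleb)
  have [measurable]: "f \<in> borel_measurable lborel" by (rule fm)
  have E[measurable]: "E \<in> sets lborel" unfolding E_def by simp
  show ?thesis
  proof (rule ennreal_le_epsilon)
    fix e :: real assume e: "0 < e"
    define l where "l = l0 + e / mE"
    have "e / mE > 0" using e mE by simp
    hence l: "l > 0" "l0 \<le> l" unfolding l_def using l0 by auto
    define A where "A = l powr (1 - p) / p"
    define B where "B = l * (1 - 1/p)"
    have A: "A \<ge> 0" and B: "B \<ge> 0" unfolding A_def B_def using p l by auto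
    have pt: "ennreal \<bar>f x - a\<bar> * indicator E x
        \<le> (ennreal A * ennreal (\<bar>f x - a\<bar> powr p) * indicator E x + ennreal B * indicator E x)" for x
    proof -
      have "\<bar>f x - a\<bar> \<le> A * \<bar>f x - a\<bar> powr p + B"
        using young_pt[of "\<bar>f x - a\<bar>" l p] l p unfolding A_def B_def by simp
      hence "ennreal \<bar>f x - a\<bar> \<le> ennreal A * ennreal (\<bar>f x - a\<bar> powr p) + ennreal B"
        using A B by (simp add: ennreal_mult''[symmetric] ennreal_plus[symmetric] del: ennreal_plus)
      thus ?thesis by (auto simp: indicator_def)
    qed
    have "(\<integral>\<^sup>+x\<in>E. ennreal \<bar>f x - a\<bar> \<partial>lborel)
        \<le> (\<integral>\<^sup>+x. ennreal A * ennreal (\<bar>f x - a\<bar> powr p) * indicator E x + ennreal B * indicator E x \<partial>lborel)"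
      by (intro nn_integral_mono pt)
    also have "\<dots> = ennreal A * (\<integral>\<^sup>+x\<in>E. ennreal (\<bar>f x - a\<bar> powr p) \<partial>lborel) + ennreal B * emeasure lborel E"
      by (subst nn_integral_add) (auto simp: nn_integral_cmult_indicator[OF E] mult.assoc nn_integral_cmult)
    also have "\<dots> \<le> ennreal A * ennreal (mE * l0 powr p) + ennreal B * ennreal mE"
      using Ip emE by (intro add_mono mult_left_mono) auto
    also have "\<dots> = ennreal (A * (mE * l0 powr p) + B * mE)"
      using A B mE l0 by (simp add: ennreal_mult''[symmetric] ennreal_plus[symmetric] del: ennreal_plus)
    also have "A * (mE * l0 powr p) + B * mE \<le> mE * l0 + e"
    proof -
      have "l0 powr p \<le> l powr p" using l l0 p by (intro powr_mono2) auto
      hence "A * (mE * l0 powr p) \<le> A * (mE * l powr p)" using A mE by (intro mult_left_mono) auto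
      also have "A * (mE * l powr p) = mE * l / p"
        unfolding A_def using l p by (simp add: powr_diff field_simps)
      finally have "A * (mE * l0 powr p) + B * mE \<le> mE * l / p + mE * l * (1 - 1/p)"
        unfolding B_def by simp
      also have "\<dots> = mE * l" using p by (simp add: field_simps)
      also have "\<dots> = mE * l0 + e" unfolding l_def using mE by (simp add: field_simps)
      finally show ?thesis .
    qed
    hence "ennreal (A * (mE * l0 powr p) + B * mE) \<le> ennreal (mE * l0) + ennreal e"
      using mE l0 e by (simp add: ennreal_plus[symmetric] del: ennreal_plus)
    finally show "(\<integral>\<^sup>+x\<in>E. ennreal \<bar>f x - avg f E\<bar> \<partial>lborel) \<le> ennreal (mleb E * (M * mleb E powr (\<gamma> / DIM('a)))) + ennreal e"
      unfolding a_def mE_def l0_def .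
  qed
qed



lemma avg_diff_bound:
  fixes f :: "'a::euclidean_space \<Rightarrow> real"
  assumes int: "set_integrable lborel F f" and F: "F \<in> sets lborel"
    and em: "emeasure lborel F = ennreal (mleb F)" and pos: "mleb F > 0"
  shows "ennreal (mleb F * \<bar>avg f F - a\<bar>) \<le> (\<integral>\<^sup>+x\<in>F. ennreal \<bar>f x - a\<bar> \<partial>lborel)"
proof -
  have meas: "measure lborel F = mleb F" using em pos by (simp add: measure_def)
  have ci: "set_integrable lborel F (\<lambda>_. a)"
    using em F by (simp add: set_integrable_def integrable_real_mult_indicator)
  have "mleb F * (avg f F - a) = (LINT x:F|lborel. f x) - (LINT x:F|lborel. a)"
    using pos F em meas by (simp add: avg_def set_integral_const field_simps)
  also have "\<dots> = (LINT x:F|lborel. f x - a)"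
    using int ci by simp
  finally have eq: "mleb F * (avg f F - a) = (LINT x:F|lborel. f x - a)" .
  have i2: "integrable lborel (\<lambda>x. indicator F x *\<^sub>R (f x - a))"
    using int ci unfolding set_integrable_def[symmetric] by simp
  have "ennreal (mleb F * \<bar>avg f F - a\<bar>) = ennreal (norm (LINT x:F|lborel. f x - a))"
    using pos by (simp add: eq[symmetric] abs_mult)
  also have "\<dots> \<le> (\<integral>\<^sup>+x. norm (indicator F x *\<^sub>R (f x - a)) \<partial>lborel)"
    unfolding set_lebesgue_integral_def by (rule integral_norm_bound_ennreal[OF i2])
  also have "\<dots> = (\<integral>\<^sup>+x\<in>F. ennreal \<bar>f x - a\<bar> \<partial>lborel)"
    by (intro nn_integral_cong) (auto simp: indicator_def)
  finally show ?thesis .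
qed



lemma mleb_ball_powr_g:
  assumes "r > 0"
  shows "mleb (ball (c::'a::euclidean_space) r) powr (\<gamma> / DIM('a))
      = unit_ball_vol (DIM('a)) powr (\<gamma> / DIM('a)) * r powr \<gamma>"
  using mleb_ball_powr[OF assms, of c "\<gamma> / DIM('a)"] by simp

lemma pow2_powr_le: "\<gamma> \<le> 1 \<Longrightarrow> ((2::real) ^ k) powr \<gamma> \<le> 2 ^ k"
proof -
  assume g: "\<gamma> \<le> 1"
  have "((2::real) ^ k) powr \<gamma> \<le> (2 ^ k) powr 1"
    using g by (intro powr_mono) auto
  thus ?thesis by simp
qed

locale camp =
  fixes f :: "'a::euclidean_space \<Rightarrow> real" and p \<gamma> M :: real
  assumes li: "locally_integrable f" and N: "campanato_norm p \<gamma> f \<le> ennreal M"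
    and M: "M \<ge> 0" and p: "p \<ge> 1" and g1: "\<gamma> \<le> 1"
begin

definition W where "W = unit_ball_vol (DIM('a)) powr (\<gamma> / DIM('a))"

lemma W_pos: "W > 0" unfolding W_def by (smt (verit) unit_ball_vol_pos of_nat_0_le_iff powr_gt_zero)

lemma fm[measurable]: "f \<in> borel_measurable lborel" by (rule li_meas[OF li])

lemma CL1': 
  assumes "r > 0"
  shows "(\<integral>\<^sup>+x\<in>ball c r. ennreal \<bar>f x - avg f (ball c r)\<bar> \<partial>lborel)
          \<le> ennreal (mleb (ball c r) * (M * W * r powr \<gamma>))"
  using CL_1[OF N M assms p fm, of c] mleb_ball_powr_g[OF assms, of c \<gamma>] unfolding W_def
  by (simp add: mult.assoc)

lemma CLp': 
  assumes "r > 0"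
  shows "(\<integral>\<^sup>+x\<in>ball c r. ennreal (\<bar>f x - avg f (ball c r)\<bar> powr p) \<partial>lborel)
          \<le> ennreal (mleb (ball c r) * (M * W * r powr \<gamma>) powr p)"
  using CL_p[OF N M assms p, of c] mleb_ball_powr_g[OF assms, of c \<gamma>] unfolding W_def
  by (simp add: mult.assoc)

lemma T1:
  assumes s: "s > 0"
  shows "\<bar>avg f (ball c s) - avg f (ball c (2 * s))\<bar> \<le> 2 ^ DIM('a) * M * W * (2 * s) powr \<gamma>"
proof -
  define F where "F = ball c s"
  define F' where "F' = ball c (2 * s)"
  have mF: "mleb F > 0" unfolding F_def using s by (rule mleb_ball_pos)
  have mF': "mleb F' = 2 ^ DIM('a) * mleb F" unfolding F_def F'_def using s
    by (simp add: mleb_ball power_mult_distrib)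
  have "ennreal (mleb F * \<bar>avg f F - avg f F'\<bar>) \<le> (\<integral>\<^sup>+x\<in>F. ennreal \<bar>f x - avg f F'\<bar> \<partial>lborel)"
    by (rule avg_diff_bound) (use s mF in \<open>auto simp: F_def li_ball[OF li] emeasure_ball_mleb\<close>)
  also have "\<dots> \<le> (\<integral>\<^sup>+x\<in>F'. ennreal \<bar>f x - avg f F'\<bar> \<partial>lborel)"
    unfolding F_def F'_def using s
    by (intro nn_integral_mono) (auto simp: indicator_def)
  also have "\<dots> \<le> ennreal (mleb F' * (M * W * (2 * s) powr \<gamma>))"
    unfolding F'_def using s by (intro CL1') auto
  finally have "mleb F * \<bar>avg f F - avg f F'\<bar> \<le> mleb F' * (M * W * (2 * s) powr \<gamma>)"
    using M W_pos mF' mF by (subst (asm) ennreal_le_iff) auto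
  hence "mleb F * \<bar>avg f F - avg f F'\<bar> \<le> mleb F * (2 ^ DIM('a) * M * W * (2 * s) powr \<gamma>)"
    unfolding mF' by (simp add: mult_ac)
  thus ?thesis using mF unfolding F_def F'_def by simp
qed

lemma T2:
  assumes s: "s > 0"
  shows "\<bar>avg f (ball c (2^k * s)) - avg f (ball c s)\<bar> \<le> 2 ^ DIM('a) * M * W * s powr \<gamma> * (2 ^ (k+1) - 2)"
proof (induction k)
  case 0 thus ?case by simp
next
  case (Suc k)
  have "\<bar>avg f (ball c (2^k * s)) - avg f (ball c (2 * (2^k * s)))\<bar>
        \<le> 2 ^ DIM('a) * M * W * (2 * (2^k * s)) powr \<gamma>"
    using s by (intro T1) auto
  also have "(2 * (2^k * s)) powr \<gamma> = (2 ^ (k+1)) powr \<gamma> * s powr \<gamma>"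
    using s by (simp add: powr_mult)
  also have "\<dots> \<le> 2 ^ (k+1) * s powr \<gamma>"
    using pow2_powr_le[OF g1, of "k+1"] by (intro mult_right_mono) auto
  finally have step: "\<bar>avg f (ball c (2^k * s)) - avg f (ball c (2^(Suc k) * s))\<bar>
        \<le> 2 ^ DIM('a) * M * W * (2 ^ (k+1) * s powr \<gamma>)"
    using M W_pos by (simp add: mult_left_mono mult.assoc)
  show ?case
    using step Suc.IH by (simp add: algebra_simps) 
qed

end



lemma decay:
  fixes A :: real and k m :: nat
  assumes A: "A > 0" and k: "k \<ge> 1" and m: "m > 0"
  shows "exp (- A * 4 ^ (k - 1)) \<le> real m ^ m * (4 / A) ^ m * (1 / 4 ^ m) ^ k"
proof -
  have "exp (- (A * 4 ^ (k - 1))) \<le> real m ^ m / (A * 4 ^ (k - 1)) ^ m"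
    using A m by (intro exp_neg_bound) auto
  also have "(A * 4 ^ (k - 1)) ^ m = A ^ m * (4 ^ k) ^ m / 4 ^ m"
  proof -
    have "(4::real) ^ k = 4 * 4 ^ (k - 1)" using k by (metis Suc_diff_1 less_le_trans zero_less_one power_Suc)
    thus ?thesis by (simp add: power_mult_distrib)
  qed
  also have "real m ^ m / (A ^ m * (4 ^ k) ^ m / 4 ^ m) = real m ^ m * (4 / A) ^ m * (1 / 4 ^ m) ^ k"
    using A by (simp add: power_divide field_simps flip: power_mult)
  finally show ?thesis by simp
qed

lemma gauss_decomp:
  fixes x x0 y :: "'a::euclidean_space" and A r :: real
  assumes A: "A > 0" and r: "r > 0" and x: "x \<in> ball x0 r"
  defines "m \<equiv> DIM('a) + 2"
  defines "D \<equiv> max 1 (real m ^ m * (4 / A) ^ m)"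
  shows "ennreal (exp (- A * (dist x y)\<^sup>2 / r\<^sup>2))
         \<le> (\<Sum>k. ennreal (D * (1 / 4 ^ m) ^ k) * indicator (ball x0 (2 ^ (k+1) * r)) y)"
proof -
  have D1: "D \<ge> 1" unfolding D_def by simp
  have ex: "\<exists>k. y \<in> ball x0 (2 ^ (k+1) * r)"
  proof -
    obtain k where "dist x0 y / r < 2 ^ k" using real_arch_pow[of 2 "dist x0 y / r"] by auto
    hence "dist x0 y < 2 ^ k * r" using r by (simp add: field_simps)
    also have "\<dots> \<le> 2 ^ (k+1) * r" using r by simp
    finally show ?thesis by auto
  qed
  define k where "k = (LEAST k. y \<in> ball x0 (2 ^ (k+1) * r))"
  have yk: "y \<in> ball x0 (2 ^ (k+1) * r)" unfolding k_def using ex by (rule LeastI_ex)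
  have bnd: "exp (- A * (dist x y)\<^sup>2 / r\<^sup>2) \<le> D * (1 / 4 ^ m) ^ k"
  proof (cases "k = 0")
    case True
    have e1: "exp (- A * (dist x y)\<^sup>2 / r\<^sup>2) \<le> 1" using A r by simp
    have "exp (- A * (dist x y)\<^sup>2 / r\<^sup>2) \<le> D" using e1 D1 by linarith
    thus ?thesis using True by simp
  next
    case False
    hence k1: "k \<ge> 1" by simp
    have "y \<notin> ball x0 (2 ^ (k - 1 + 1) * r)"
      unfolding k_def using False not_less_Least[of "k - 1" "\<lambda>k. y \<in> ball x0 (2 ^ (k+1) * r)"]
      by (metis diff_less k_def less_one zero_less_iff_neq_zero)
    hence d0: "dist x0 y \<ge> 2 ^ k * r" using k1 by simp
    have "dist x0 x < r" using x by simp
    hence "dist x y \<ge> 2 ^ k * r - r" using d0 dist_triangle[of x0 y x] by (simp add: dist_commute)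
    moreover have "2 ^ k * r - r \<ge> 2 ^ (k - 1) * r"
    proof -
      have "(2::real) ^ k = 2 * 2 ^ (k - 1)" using k1
        by (metis Suc_diff_1 less_le_trans zero_less_one power_Suc)
      moreover have "(1::real) \<le> 2 ^ (k - 1)" by simp
      ultimately show ?thesis using r by (simp add: algebra_simps)
    qed
    ultimately have dd: "dist x y \<ge> 2 ^ (k - 1) * r" by linarith
    hence "(dist x y)\<^sup>2 \<ge> (2 ^ (k - 1) * r)\<^sup>2" using r by (intro power_mono) auto
    hence "(dist x y)\<^sup>2 / r\<^sup>2 \<ge> 4 ^ (k - 1)"
    proof -
      have "(2 ^ (k - 1) * r)\<^sup>2 = 4 ^ (k - 1) * r\<^sup>2"
      proof -
        have "((2::real) ^ (k - 1))\<^sup>2 = 4 ^ (k - 1)"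
          by (metis power_mult_distrib power2_eq_square mult_2 numeral_Bit0 numeral_One power_mult mult.commute) 
        thus ?thesis by (simp add: power_mult_distrib)
      qed
      with \<open>(dist x y)\<^sup>2 \<ge> (2 ^ (k - 1) * r)\<^sup>2\<close> show ?thesis using r by (simp add: field_simps)
    qed
    hence "A * (dist x y)\<^sup>2 / r\<^sup>2 \<ge> A * 4 ^ (k - 1)" using A
      by (metis mult_left_mono less_imp_le times_divide_eq_right)
    hence "exp (- A * (dist x y)\<^sup>2 / r\<^sup>2) \<le> exp (- A * 4 ^ (k - 1))" by simp
    also have "\<dots> \<le> real m ^ m * (4 / A) ^ m * (1 / 4 ^ m) ^ k"
      using A k1 unfolding m_def by (intro decay) auto
    also have "\<dots> \<le> D * (1 / 4 ^ m) ^ k" unfolding D_def by (intro mult_right_mono) auto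
    finally show ?thesis .
  qed
  have "ennreal (exp (- A * (dist x y)\<^sup>2 / r\<^sup>2)) \<le> ennreal (D * (1 / 4 ^ m) ^ k) * indicator (ball x0 (2 ^ (k+1) * r)) y"
    using yk ennreal_leI[OF bnd] by simp
  also have "\<dots> = (\<Sum>i\<in>{k}. ennreal (D * (1 / 4 ^ m) ^ i) * indicator (ball x0 (2 ^ (i+1) * r)) y)" by (simp only: sum.insert_if sum.empty finite.emptyI empty_iff if_False add_0_right)
  also have "\<dots> \<le> (\<Sum>k. ennreal (D * (1 / 4 ^ m) ^ k) * indicator (ball x0 (2 ^ (k+1) * r)) y)"
    by (intro sum_le_suminf summableI) auto
  finally show ?thesis .
qed



lemma alg1: "(1 / 4 ^ m) ^ k * ((2::real) ^ (k+1)) ^ n * 2 ^ (n+k+3) = 2 ^ (2*n+3) * (2 ^ (n+1) / 4 ^ m) ^ k"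
  by (simp add: power_add power_mult_distrib power_divide field_simps flip: power_mult) (metis mult_2_right power_add)

lemma alg2: "(2::real) ^ (n+1) / 4 ^ (n+2) \<le> 1/2"
proof -
  have "(4::real) ^ (n+2) = 2 ^ (2*(n+2))" by (simp add: power_mult)
  also have "(2::real) ^ (2*(n+2)) \<ge> 2 ^ (n+2)" by (intro power_increasing) auto
  finally have "(4::real) ^ (n+2) \<ge> 2 * 2 ^ (n+1)" by simp
  thus ?thesis by (simp add: field_simps)
qed

context camp begin

lemma AN:
  assumes r: "r > 0"
  shows "(\<integral>\<^sup>+y\<in>ball x0 (2^(k+1) * r). ennreal \<bar>f y - avg f (ball x0 r)\<bar> \<partial>lborel)
     \<le> ennreal (unit_ball_vol DIM('a) * r ^ DIM('a) * M * W * r powr \<gamma> * (2 ^ (k+1)) ^ DIM('a) * 2 ^ (DIM('a)+k+3))"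
proof -
  define n where "n = DIM('a)"
  define \<rho> where "\<rho> = 2^(k+1) * r"
  define E where "E = ball x0 \<rho>"
  define aE where "aE = avg f E"
  define c0 where "c0 = avg f (ball x0 r)"
  have \<rho>: "\<rho> > 0" unfolding \<rho>_def using r by simp
  have mE: "mleb E = unit_ball_vol n * r ^ n * (2 ^ (k+1)) ^ n"
    unfolding E_def n_def \<rho>_def using r by (simp add: mleb_ball power_mult_distrib)
  have mE0: "mleb E \<ge> 0" unfolding mE using r by simp
  have E[measurable]: "E \<in> sets lborel" unfolding E_def by simp
  have "(\<integral>\<^sup>+y\<in>E. ennreal \<bar>f y - c0\<bar> \<partial>lborel)
     \<le> (\<integral>\<^sup>+y. ennreal \<bar>f y - aE\<bar> * indicator E y + ennreal \<bar>aE - c0\<bar> * indicator E y \<partial>lborel)"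
  proof (intro nn_integral_mono)
    fix y
    have "ennreal \<bar>f y - c0\<bar> \<le> ennreal (\<bar>f y - aE\<bar> + \<bar>aE - c0\<bar>)" by (intro ennreal_leI) linarith
    thus "ennreal \<bar>f y - c0\<bar> * indicator E y \<le> ennreal \<bar>f y - aE\<bar> * indicator E y + ennreal \<bar>aE - c0\<bar> * indicator E y"
      by (auto simp: indicator_def ennreal_plus[symmetric] simp del: ennreal_plus)
  qed
  also have "\<dots> = (\<integral>\<^sup>+y\<in>E. ennreal \<bar>f y - aE\<bar> \<partial>lborel) + ennreal \<bar>aE - c0\<bar> * emeasure lborel E"
    by (subst nn_integral_add) (auto simp: nn_integral_cmult_indicator[OF E])
  also have "\<dots> \<le> ennreal (mleb E * (M * W * \<rho> powr \<gamma>)) + ennreal \<bar>aE - c0\<bar> * ennreal (mleb E)"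
    unfolding aE_def E_def using \<rho> by (intro add_mono CL1') (auto simp: emeasure_ball_mleb)
  also have "\<dots> = ennreal (mleb E * (M * W * \<rho> powr \<gamma>) + \<bar>aE - c0\<bar> * mleb E)"
    using mE0 M W_pos by (simp add: ennreal_mult''[symmetric] ennreal_plus[symmetric] del: ennreal_plus)
  also have "mleb E * (M * W * \<rho> powr \<gamma>) + \<bar>aE - c0\<bar> * mleb E
      \<le> unit_ball_vol n * r ^ n * M * W * r powr \<gamma> * (2 ^ (k+1)) ^ n * 2 ^ (n+k+3)"
  proof -
    have rp: "\<rho> powr \<gamma> \<le> 2 ^ (k+1) * r powr \<gamma>"
    proof -
      have "\<rho> powr \<gamma> = (2 ^ (k+1)) powr \<gamma> * r powr \<gamma>" unfolding \<rho>_def using r by (simp add: powr_mult)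
      also have "\<dots> \<le> 2 ^ (k+1) * r powr \<gamma>" using pow2_powr_le[OF g1, of "k+1"] by (intro mult_right_mono) auto
      finally show ?thesis .
    qed
    have ad: "\<bar>aE - c0\<bar> \<le> 2 ^ n * M * W * r powr \<gamma> * (2 ^ (k+2) - 2)"
      using T2[OF r, of x0 "k+1"] unfolding aE_def c0_def E_def \<rho>_def n_def by simp
    have "mleb E * (M * W * \<rho> powr \<gamma>) + \<bar>aE - c0\<bar> * mleb E
       \<le> mleb E * (M * W * (2 ^ (k+1) * r powr \<gamma>)) + (2 ^ n * M * W * r powr \<gamma> * (2 ^ (k+2) - 2)) * mleb E"
      using rp ad mE0 M W_pos by (intro add_mono mult_left_mono mult_right_mono) auto
    also have "\<dots> = mleb E * M * W * r powr \<gamma> * (2 ^ (k+1) + 2 ^ n * (2 ^ (k+2) - 2))"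
      by (simp add: algebra_simps)
    also have "\<dots> \<le> mleb E * M * W * r powr \<gamma> * 2 ^ (n+k+3)"
    proof (intro mult_left_mono)
      have h1: "(2::real) ^ (k+1) \<le> 2 ^ n * 2 ^ (k+2)"
      proof -
        have "(2::real) ^ (k+1) \<le> 2 ^ (k+2)" by (intro power_increasing) auto
        also have "\<dots> \<le> 2 ^ n * 2 ^ (k+2)" by simp
        finally show ?thesis .
      qed
      have h2: "(2::real) ^ n * (2 ^ (k+2) - 2) \<le> 2 ^ n * 2 ^ (k+2)" by simp
      have h3: "(2::real) ^ (n+k+3) = 2 * (2 ^ n * 2 ^ (k+2))"
        by (simp add: power_add)
      show "2 ^ (k+1) + 2 ^ n * (2 ^ (k+2) - 2) \<le> (2::real) ^ (n+k+3)"
        using h1 h2 h3 by linarith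
    qed (use mE0 M W_pos in auto)
    finally show ?thesis unfolding mE by (simp add: mult_ac)
  qed
  finally show ?thesis unfolding E_def c0_def \<rho>_def n_def by (meson ennreal_leI)
qed

end


context camp begin

definition Dc :: "real \<Rightarrow> real" where
  "Dc A = max 1 (real (DIM('a) + 2) ^ (DIM('a) + 2) * (4 / A) ^ (DIM('a) + 2))"

definition KC :: "real \<Rightarrow> real \<Rightarrow> real" where
  "KC Cg A = 2 * (Cg * Dc A * unit_ball_vol DIM('a) * W * 2 ^ (2 * DIM('a) + 3))"

lemma KE:
  fixes Kf :: "'a \<Rightarrow> real" and Cg A r :: real and x x0 :: 'a
  assumes Cg: "Cg > 0" and A: "A > 0" and r: "r > 0" and x: "x \<in> ball x0 r"
    and Km[measurable]: "Kf \<in> borel_measurable lborel"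
    and Kb: "\<And>y. \<bar>Kf y\<bar> \<le> Cg * r powr (- real DIM('a)) * exp (- A * (dist x y)\<^sup>2 / r\<^sup>2)"
  shows "(\<integral>\<^sup>+y. ennreal (\<bar>Kf y\<bar> * \<bar>f y - avg f (ball x0 r)\<bar>) \<partial>lborel) \<le> ennreal (KC Cg A * M * r powr \<gamma>)"
proof -
  define n where "n = DIM('a)"
  define m where "m = n + 2"
  define D where "D = Dc A"
  define \<rho>0 :: real where "\<rho>0 = 1 / 4 ^ m"
  define c0 where "c0 = avg f (ball x0 r)"
  define a where "a = Cg * r powr (- real n)"
  define E where "E = (\<lambda>k::nat. ball x0 (2 ^ (k+1) * r))"
  define Q where "Q = Cg * D * unit_ball_vol n * W * 2 ^ (2 * n + 3) * M * r powr \<gamma>"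
  have a0: "a \<ge> 0" unfolding a_def using Cg by simp
  have D1: "D \<ge> 1" unfolding D_def Dc_def by simp
  have Q0: "Q \<ge> 0" unfolding Q_def using Cg D1 W_pos M by simp
  have E_meas[measurable]: "E k \<in> sets lborel" for k unfolding E_def by simp
  have "(\<integral>\<^sup>+y. ennreal (\<bar>Kf y\<bar> * \<bar>f y - c0\<bar>) \<partial>lborel)
     \<le> (\<integral>\<^sup>+y. ennreal a * (\<Sum>k. ennreal (D * \<rho>0 ^ k) * indicator (E k) y) * ennreal \<bar>f y - c0\<bar> \<partial>lborel)"
  proof (intro nn_integral_mono)
    fix y
    have "\<bar>Kf y\<bar> * \<bar>f y - c0\<bar> \<le> a * exp (- A * (dist x y)\<^sup>2 / r\<^sup>2) * \<bar>f y - c0\<bar>"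
      using Kb[of y] unfolding a_def n_def by (intro mult_right_mono) auto
    hence "ennreal (\<bar>Kf y\<bar> * \<bar>f y - c0\<bar>) \<le> ennreal a * ennreal (exp (- A * (dist x y)\<^sup>2 / r\<^sup>2)) * ennreal \<bar>f y - c0\<bar>"
      using a0 by (simp add: ennreal_mult''[symmetric] ennreal_leI)
    also have "\<dots> \<le> ennreal a * (\<Sum>k. ennreal (D * \<rho>0 ^ k) * indicator (E k) y) * ennreal \<bar>f y - c0\<bar>"
      using gauss_decomp[OF A r x, of y] unfolding D_def Dc_def \<rho>0_def m_def n_def E_def
      by (intro mult_right_mono mult_left_mono) auto
    finally show "ennreal (\<bar>Kf y\<bar> * \<bar>f y - c0\<bar>) \<le> ennreal a * (\<Sum>k. ennreal (D * \<rho>0 ^ k) * indicator (E k) y) * ennreal \<bar>f y - c0\<bar>" .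
  qed
  also have "\<dots> = (\<integral>\<^sup>+y. (\<Sum>k. ennreal (a * (D * \<rho>0 ^ k)) * (ennreal \<bar>f y - c0\<bar> * indicator (E k) y)) \<partial>lborel)"
  proof (intro nn_integral_cong)
    fix y
    have "ennreal a * (\<Sum>k. ennreal (D * \<rho>0 ^ k) * indicator (E k) y) * ennreal \<bar>f y - c0\<bar>
        = (\<Sum>k. ennreal a * (ennreal (D * \<rho>0 ^ k) * indicator (E k) y) * ennreal \<bar>f y - c0\<bar>)"
      by simp
    also have "\<dots> = (\<Sum>k. ennreal (a * (D * \<rho>0 ^ k)) * (ennreal \<bar>f y - c0\<bar> * indicator (E k) y))"
      using a0 D1 unfolding \<rho>0_def by (intro arg_cong[where f=suminf] ext) (simp add: ennreal_mult'' mult_ac)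
    finally show "ennreal a * (\<Sum>k. ennreal (D * \<rho>0 ^ k) * indicator (E k) y) * ennreal \<bar>f y - c0\<bar>
        = (\<Sum>k. ennreal (a * (D * \<rho>0 ^ k)) * (ennreal \<bar>f y - c0\<bar> * indicator (E k) y))" .
  qed
  also have "\<dots> = (\<Sum>k. ennreal (a * (D * \<rho>0 ^ k)) * (\<integral>\<^sup>+y\<in>E k. ennreal \<bar>f y - c0\<bar> \<partial>lborel))"
    by (subst nn_integral_suminf) (auto simp: nn_integral_cmult)
  also have "\<dots> \<le> (\<Sum>k. ennreal (Q * (1/2) ^ k))"
  proof (intro suminf_le summableI)
    fix k
    define B where "B = unit_ball_vol n * r ^ n * M * W * r powr \<gamma> * (2 ^ (k+1)) ^ n * 2 ^ (n+k+3)"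
    have "(\<integral>\<^sup>+y\<in>E k. ennreal \<bar>f y - c0\<bar> \<partial>lborel) \<le> ennreal B"
      using AN[OF r, of x0 k] unfolding B_def E_def c0_def n_def by simp
    hence "ennreal (a * (D * \<rho>0 ^ k)) * (\<integral>\<^sup>+y\<in>E k. ennreal \<bar>f y - c0\<bar> \<partial>lborel) \<le> ennreal (a * (D * \<rho>0 ^ k)) * ennreal B"
      by (intro mult_left_mono) auto
    also have "\<dots> = ennreal (a * (D * \<rho>0 ^ k) * B)"
      using a0 D1 by (subst ennreal_mult') (auto simp: \<rho>0_def)
    also have "a * (D * \<rho>0 ^ k) * B \<le> Q * (1/2) ^ k"
    proof -
      have rr: "r powr (- real n) * r ^ n = 1" using r by (simp add: powr_minus powr_realpow[symmetric] field_simps)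
      have "a * (D * \<rho>0 ^ k) * B = (Cg * D * unit_ball_vol n * W * M * r powr \<gamma>) * (r powr (- real n) * r ^ n)
           * (\<rho>0 ^ k * (2 ^ (k+1)) ^ n * 2 ^ (n+k+3))"
        unfolding a_def B_def by (simp add: mult_ac)
      also have "\<rho>0 ^ k * (2 ^ (k+1)) ^ n * 2 ^ (n+k+3) = 2 ^ (2*n+3) * (2 ^ (n+1) / 4 ^ m) ^ k"
        unfolding \<rho>0_def by (rule alg1)
      also have "(2 ^ (n+1) / 4 ^ m) ^ k \<le> ((1::real)/2) ^ k"
        unfolding m_def using alg2[of n] by (intro power_mono) auto
      hence "(Cg * D * unit_ball_vol n * W * M * r powr \<gamma>) * (r powr (- real n) * r ^ n) * (2 ^ (2*n+3) * (2 ^ (n+1) / 4 ^ m) ^ k)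
          \<le> (Cg * D * unit_ball_vol n * W * M * r powr \<gamma>) * (r powr (- real n) * r ^ n) * (2 ^ (2*n+3) * (1/2) ^ k)"
        using Cg D1 W_pos M by (intro mult_left_mono) (auto simp: rr)
      also have "\<dots> = Q * (1/2) ^ k" unfolding Q_def rr by (simp add: mult_ac)
      finally show ?thesis .
    qed
    finally show "ennreal (a * (D * \<rho>0 ^ k)) * (\<integral>\<^sup>+y\<in>E k. ennreal \<bar>f y - c0\<bar> \<partial>lborel) \<le> ennreal (Q * (1/2) ^ k)"
      by (meson ennreal_leI)
  qed
  also have "(\<Sum>k. ennreal (Q * (1/2) ^ k)) = ennreal (\<Sum>k. Q * (1/2) ^ k)"
    using Q0 by (intro suminf_ennreal2) (auto intro: summable_mult summable_geometric)
  also have "(\<Sum>k. Q * (1/2::real) ^ k) = 2 * Q"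
    using suminf_mult[OF summable_geometric[of "1/2::real"], of Q] suminf_geometric[of "1/2::real"] by simp
  also have "2 * Q = KC Cg A * M * r powr \<gamma>"
    unfolding Q_def KC_def D_def n_def by (simp add: mult_ac)
  finally show ?thesis unfolding c0_def .
qed

end


lemma r2_powr: "r > 0 \<Longrightarrow> (r\<^sup>2) powr (- real n / 2) = r powr (- real n)"
proof -
  assume r: "r > 0"
  have "r\<^sup>2 = r powr 2" using r by (simp add: powr_realpow)
  hence "(r\<^sup>2) powr (- real n / 2) = r powr (2 * (- real n / 2))" by (simp add: powr_powr)
  thus ?thesis by simp
qed

lemma enn_root_le:
  assumes "v \<le> ennreal V" "V \<ge> 0" "p > 0"
  shows "enn_root p v \<le> ennreal (V powr (1/p))"
proof -
  have "v \<noteq> top" using assms(1) by (auto simp: top_unique)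
  then obtain v' where v': "v = ennreal v'" "v' \<ge> 0" by (cases v rule: ennreal_cases) auto
  hence "v' \<le> V" using assms by simp
  hence "v' powr (1/p) \<le> V powr (1/p)" using v' assms by (intro powr_mono2) auto
  thus ?thesis using v' by (simp add: enn_root_def)
qed

context camp begin

lemma PT:
  fixes Kf :: "'a \<Rightarrow> real" and Cg A r :: real and x x0 :: 'a
  assumes Cg: "Cg > 0" and A: "A > 0" and r: "r > 0" and x: "x \<in> ball x0 r"
    and Km[measurable]: "Kf \<in> borel_measurable lborel"
    and Kb: "\<And>y. \<bar>Kf y\<bar> \<le> Cg * (r\<^sup>2) powr (- real DIM('a) / 2) * exp (- A * (dist x y)\<^sup>2 / r\<^sup>2)"
    and one: "(\<integral>y. Kf y \<partial>lborel) = 1"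
  shows "\<bar>f x - (\<integral>y. Kf y * f y \<partial>lborel)\<bar> \<le> \<bar>f x - avg f (ball x0 r)\<bar> + KC Cg A * M * r powr \<gamma>"
proof -
  define c0 where "c0 = avg f (ball x0 r)"
  define b where "b = KC Cg A * M * r powr \<gamma>"
  have b0: "b \<ge> 0" unfolding b_def KC_def Dc_def using Cg W_pos M by simp
  have KE': "(\<integral>\<^sup>+y. ennreal (\<bar>Kf y\<bar> * \<bar>f y - c0\<bar>) \<partial>lborel) \<le> ennreal b"
    unfolding b_def c0_def
  proof (rule KE[OF Cg A r x Km])
    fix y show "\<bar>Kf y\<bar> \<le> Cg * r powr (- real DIM('a)) * exp (- A * (dist x y)\<^sup>2 / r\<^sup>2)"
      using Kb[of y] unfolding r2_powr[OF r] .
  qed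
  have iK: "integrable lborel Kf"
  proof (rule ccontr)
    assume "\<not> integrable lborel Kf"
    hence "(\<integral>y. Kf y \<partial>lborel) = 0" by (rule not_integrable_integral_eq)
    with one show False by simp
  qed
  have iK2: "integrable lborel (\<lambda>y. Kf y * (f y - c0))"
  proof (rule integrableI_bounded)
    show "(\<integral>\<^sup>+y. ennreal (norm (Kf y * (f y - c0))) \<partial>lborel) < \<infinity>"
    proof -
      have "(\<integral>\<^sup>+y. ennreal (norm (Kf y * (f y - c0))) \<partial>lborel) = (\<integral>\<^sup>+y. ennreal (\<bar>Kf y\<bar> * \<bar>f y - c0\<bar>) \<partial>lborel)"
        by (simp add: abs_mult)
      also note KE'
      also have "ennreal b < \<infinity>" by simp
      finally show ?thesis .
    qed
  qed simp
  have "(\<integral>y. Kf y * f y \<partial>lborel) = (\<integral>y. Kf y * (f y - c0) + c0 * Kf y \<partial>lborel)"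
    by (intro Bochner_Integration.integral_cong) (auto simp: algebra_simps)
  also have "\<dots> = (\<integral>y. Kf y * (f y - c0) \<partial>lborel) + c0"
    using iK iK2 one by simp
  finally have heq: "(\<integral>y. Kf y * f y \<partial>lborel) = (\<integral>y. Kf y * (f y - c0) \<partial>lborel) + c0" .
  have "ennreal (norm (\<integral>y. Kf y * (f y - c0) \<partial>lborel)) \<le> (\<integral>\<^sup>+y. norm (Kf y * (f y - c0)) \<partial>lborel)"
    by (rule integral_norm_bound_ennreal[OF iK2])
  also have "\<dots> = (\<integral>\<^sup>+y. ennreal (\<bar>Kf y\<bar> * \<bar>f y - c0\<bar>) \<partial>lborel)" by (simp add: abs_mult)
  also note KE'
  finally have "\<bar>\<integral>y. Kf y * (f y - c0) \<partial>lborel\<bar> \<le> b" using b0 by (simp add: ennreal_le_iff)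
  thus ?thesis unfolding heq c0_def[symmetric] b_def[symmetric] by linarith
qed

end


context camp begin

lemma ball_bound:
  fixes P :: "real \<Rightarrow> 'a \<Rightarrow> 'a \<Rightarrow> real" and Cg A r :: real and x0 :: 'a
  assumes Cg: "Cg > 0" and A: "A > 0" and r: "r > 0"
    and meas: "\<And>t. t > 0 \<Longrightarrow> (\<lambda>(x, y). P t x y) \<in> borel_measurable (lborel \<Otimes>\<^sub>M lborel)"
    and gb: "\<forall>t>0. \<forall>x y. \<bar>P t x y\<bar> \<le> Cg * t powr (- real DIM('a) / 2) * exp (- A * (dist x y)\<^sup>2 / t)"
    and conserv: "\<And>t. t > 0 \<Longrightarrow> AE x in lborel. (\<integral>y. P t x y \<partial>lborel) = 1"
  shows "ennreal (mleb (ball x0 r) powr (- \<gamma> / DIM('a))) *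
        enn_root p (ennreal (1 / mleb (ball x0 r)) *
           (\<integral>\<^sup>+ x\<in>ball x0 r. ennreal (\<bar>f x - heat P (tB (ball x0 r)) f x\<bar> powr p) \<partial>lborel))
      \<le> ennreal (4 * (1 + KC Cg A / W)) * ennreal M"
proof -
  define B where "B = ball x0 r"
  define t where "t = r\<^sup>2"
  define K where "K = KC Cg A"
  define c0 where "c0 = avg f B"
  define mB where "mB = mleb B"
  define Y where "Y = K * M * r powr \<gamma>"
  define X where "X = M * W * r powr \<gamma>"
  have t: "t > 0" unfolding t_def using r by simp
  have tB: "tB B = t" unfolding B_def t_def using r by (rule tB_ball)
  have mB: "mB > 0" unfolding mB_def B_def using r by (rule mleb_ball_pos)
  have K0: "K \<ge> 0" unfolding K_def KC_def Dc_def using Cg W_pos by simp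
  have X0: "X \<ge> 0" and Y0: "Y \<ge> 0" unfolding X_def Y_def using K0 M W_pos by auto
  have Bm[measurable]: "B \<in> sets lborel" unfolding B_def by simp
  have pt: "AE x in lborel. x \<in> B \<longrightarrow> \<bar>f x - heat P t f x\<bar> \<le> \<bar>f x - c0\<bar> + Y"
    using conserv[OF t]
  proof eventually_elim
    case (elim x)
    show ?case
    proof
      assume x: "x \<in> B"
      have Km: "(\<lambda>y. P t x y) \<in> borel_measurable lborel"
        using measurable_Pair2[OF meas[OF t], of x] by simp
      show "\<bar>f x - heat P t f x\<bar> \<le> \<bar>f x - c0\<bar> + Y"
        unfolding heat_def c0_def Y_def K_def B_def
        by (rule PT[OF Cg A r _ Km _ elim]) (use x gb t in \<open>auto simp: B_def t_def\<close>)
    qed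
  qed
  have "(\<integral>\<^sup>+ x\<in>B. ennreal (\<bar>f x - heat P (tB B) f x\<bar> powr p) \<partial>lborel)
      \<le> (\<integral>\<^sup>+ x. ennreal (2 powr p) * (ennreal (\<bar>f x - c0\<bar> powr p) * indicator B x) + ennreal (2 powr p * Y powr p) * indicator B x \<partial>lborel)"
  proof (rule nn_integral_mono_AE)
    show "AE x in lborel. ennreal (\<bar>f x - heat P (tB B) f x\<bar> powr p) * indicator B x
       \<le> ennreal (2 powr p) * (ennreal (\<bar>f x - c0\<bar> powr p) * indicator B x) + ennreal (2 powr p * Y powr p) * indicator B x"
      using pt
    proof eventually_elim
      case (elim x)
      show ?case
      proof (cases "x \<in> B")
        case True
        have "\<bar>f x - heat P t f x\<bar> powr p \<le> (\<bar>f x - c0\<bar> + Y) powr p"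
          using elim True p by (intro powr_mono2) auto
        also have "\<dots> \<le> 2 powr p * (\<bar>f x - c0\<bar> powr p + Y powr p)"
          using Y0 p by (intro powr_sum_le) auto
        finally have "ennreal (\<bar>f x - heat P t f x\<bar> powr p) \<le> ennreal (2 powr p * \<bar>f x - c0\<bar> powr p + 2 powr p * Y powr p)"
          by (intro ennreal_leI) (simp add: algebra_simps)
        thus ?thesis using True tB
          by (simp add: ennreal_mult''[symmetric] ennreal_plus[symmetric] del: ennreal_plus)
      qed simp
    qed
  qed
  also have "\<dots> = ennreal (2 powr p) * (\<integral>\<^sup>+ x\<in>B. ennreal (\<bar>f x - c0\<bar> powr p) \<partial>lborel) + ennreal (2 powr p * Y powr p) * emeasure lborel B"
    by (subst nn_integral_add) (auto simp: nn_integral_cmult nn_integral_cmult_indicator[OF Bm])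
  also have "\<dots> \<le> ennreal (2 powr p) * ennreal (mB * X powr p) + ennreal (2 powr p * Y powr p) * ennreal mB"
  proof (intro add_mono mult_left_mono)
    show "(\<integral>\<^sup>+ x\<in>B. ennreal (\<bar>f x - c0\<bar> powr p) \<partial>lborel) \<le> ennreal (mB * X powr p)"
      using CLp'[OF r, of x0] unfolding B_def c0_def mB_def X_def by simp
    show "emeasure lborel B \<le> ennreal mB" unfolding B_def mB_def using r by (simp add: emeasure_ball_mleb)
  qed auto
  also have "\<dots> = ennreal (2 powr p * (mB * X powr p) + 2 powr p * Y powr p * mB)"
    using mB by (simp add: ennreal_mult''[symmetric] ennreal_plus[symmetric] del: ennreal_plus)
  also have "2 powr p * (mB * X powr p) + 2 powr p * Y powr p * mB \<le> mB * (2 powr (p + 1) * (X + Y) powr p)"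
  proof -
    have "X powr p \<le> (X + Y) powr p" "Y powr p \<le> (X + Y) powr p"
      using X0 Y0 p by (auto intro: powr_mono2)
    hence "X powr p + Y powr p \<le> 2 * (X + Y) powr p" by linarith
    hence "2 powr p * (X powr p + Y powr p) \<le> 2 powr p * (2 * (X + Y) powr p)" by simp
    hence "2 powr p * (X powr p + Y powr p) \<le> 2 powr (p + 1) * (X + Y) powr p"
      by (simp add: powr_add mult_ac)
    hence "mB * (2 powr p * (X powr p + Y powr p)) \<le> mB * (2 powr (p + 1) * (X + Y) powr p)"
      using mB by (intro mult_left_mono) auto
    thus ?thesis by (simp add: algebra_simps)
  qed
  finally have I1: "(\<integral>\<^sup>+ x\<in>B. ennreal (\<bar>f x - heat P (tB B) f x\<bar> powr p) \<partial>lborel) \<le> ennreal (mB * (2 powr (p + 1) * (X + Y) powr p))"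
    by (meson ennreal_leI)
  define V where "V = 2 powr (p + 1) * (X + Y) powr p"
  have V0: "V \<ge> 0" unfolding V_def by simp
  have "ennreal (1 / mB) * (\<integral>\<^sup>+ x\<in>B. ennreal (\<bar>f x - heat P (tB B) f x\<bar> powr p) \<partial>lborel) \<le> ennreal (1 / mB) * ennreal (mB * V)"
    using I1 unfolding V_def by (intro mult_left_mono) auto
  also have "\<dots> = ennreal V" using mB V0 by (simp add: ennreal_mult''[symmetric])
  finally have "enn_root p (ennreal (1 / mB) * (\<integral>\<^sup>+ x\<in>B. ennreal (\<bar>f x - heat P (tB B) f x\<bar> powr p) \<partial>lborel)) \<le> ennreal (V powr (1/p))"
    using V0 p by (intro enn_root_le) auto
  also have "V powr (1/p) \<le> 4 * (X + Y)"
  proof -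
    have "V powr (1/p) = 2 powr ((p + 1) / p) * (X + Y)"
      unfolding V_def using p X0 Y0 by (simp add: powr_mult powr_powr)
    also have "2 powr ((p + 1) / p) \<le> 2 powr 2"
      using p by (intro powr_mono) (auto simp: field_simps)
    hence "2 powr ((p + 1) / p) * (X + Y) \<le> 4 * (X + Y)" using X0 Y0 by (intro mult_right_mono) auto
    finally show ?thesis .
  qed
  finally have R: "enn_root p (ennreal (1 / mB) * (\<integral>\<^sup>+ x\<in>B. ennreal (\<bar>f x - heat P (tB B) f x\<bar> powr p) \<partial>lborel)) \<le> ennreal (4 * (X + Y))"
    by (meson ennreal_leI)
  have mpow: "mB powr (- \<gamma> / DIM('a)) = r powr (- \<gamma>) / W"
    unfolding mB_def B_def W_def using mleb_ball_powr_g[OF r, of x0 "- \<gamma>"]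
    by (simp add: powr_minus divide_inverse)
  have "ennreal (mB powr (- \<gamma> / DIM('a))) * enn_root p (ennreal (1 / mB) * (\<integral>\<^sup>+ x\<in>B. ennreal (\<bar>f x - heat P (tB B) f x\<bar> powr p) \<partial>lborel))
      \<le> ennreal (mB powr (- \<gamma> / DIM('a))) * ennreal (4 * (X + Y))"
    by (intro mult_left_mono R) auto
  also have "\<dots> = ennreal (mB powr (- \<gamma> / DIM('a)) * (4 * (X + Y)))" using X0 Y0 by (subst ennreal_mult'') auto
  also have "mB powr (- \<gamma> / DIM('a)) * (4 * (X + Y)) = 4 * (1 + K / W) * M"
    unfolding mpow X_def Y_def using W_pos r by (simp add: field_simps powr_minus)
  also have "ennreal (4 * (1 + K / W) * M) = ennreal (4 * (1 + KC Cg A / W)) * ennreal M"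
    unfolding K_def using K0 W_pos M by (simp add: ennreal_mult''[symmetric])
  finally show ?thesis unfolding B_def mB_def .
qed

end


theorem lemma2p1:
  fixes P :: "real \<Rightarrow> 'a::euclidean_space \<Rightarrow> 'a \<Rightarrow> real"
    and p \<gamma> :: real
  assumes "1 \<le> p"
    and "- real DIM('a) / p \<le> \<gamma>" and "\<gamma> \<le> 1" and "\<gamma> \<noteq> 0"
    and meas: "\<And>t. t > 0 \<Longrightarrow> (\<lambda>(x, y). P t x y) \<in> borel_measurable (lborel \<Otimes>\<^sub>M lborel)"
    and gauss: "\<exists>C A. C > 0 \<and> A > 0 \<and> (\<forall>t>0. \<forall>x y.
                 \<bar>P t x y\<bar> \<le> C * t powr (- real DIM('a) / 2) * exp (- A * (dist x y)\<^sup>2 / t))"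
    and conserv: "\<And>t. t > 0 \<Longrightarrow> AE x in lborel. (\<integral>y. P t x y \<partial>lborel) = 1"
  shows "\<exists>C>0. \<forall>f \<in> Campanato p \<gamma>.
           campanato_L_norm P p \<gamma> f \<le> ennreal C * campanato_norm p \<gamma> f"
proof -
  obtain Cg A where Cg: "Cg > 0" and A: "A > 0"
    and gb: "\<forall>t>0. \<forall>x y. \<bar>P t x y\<bar> \<le> Cg * t powr (- real DIM('a) / 2) * exp (- A * (dist x y)\<^sup>2 / t)"
    using gauss by blast
  define Wc where "Wc = unit_ball_vol DIM('a) powr (\<gamma> / DIM('a))"
  define Kc where "Kc = 2 * (Cg * max 1 (real (DIM('a) + 2) ^ (DIM('a) + 2) * (4 / A) ^ (DIM('a) + 2))
      * unit_ball_vol DIM('a) * Wc * 2 ^ (2 * DIM('a) + 3))"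
  define C where "C = 4 * (1 + Kc / Wc)"
  have Wc: "Wc > 0" unfolding Wc_def by (smt (verit) unit_ball_vol_pos of_nat_0_le_iff powr_gt_zero)
  have Kc: "Kc \<ge> 0" unfolding Kc_def using Cg Wc by simp
  have "Kc / Wc \<ge> 0" using Kc Wc by simp
  hence C: "C > 0" unfolding C_def by (intro mult_pos_pos) auto
  show ?thesis
  proof (intro exI[of _ C] conjI ballI C)
    fix f :: "'a \<Rightarrow> real" assume "f \<in> Campanato p \<gamma>"
    hence li: "locally_integrable f" and Nt: "campanato_norm p \<gamma> f < top"
      unfolding Campanato_def by auto
    define M where "M = enn2real (campanato_norm p \<gamma> f)"
    have NM: "campanato_norm p \<gamma> f = ennreal M" unfolding M_def using Nt by simp
    interpret camp f p \<gamma> M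
      by unfold_locales (use li NM assms(1) assms(3) in \<open>auto simp: M_def\<close>)
    have WW: "W = Wc" "KC Cg A = Kc" unfolding W_def KC_def Dc_def Wc_def Kc_def by simp_all
    show "campanato_L_norm P p \<gamma> f \<le> ennreal C * campanato_norm p \<gamma> f"
      unfolding campanato_L_norm_def NM
    proof (rule SUP_least)
      fix B :: "'a set" assume "B \<in> balls"
      then obtain x0 r where B: "B = ball x0 r" and r: "r > 0" unfolding balls_def by blast
      show "ennreal (mleb B powr (- \<gamma> / DIM('a))) *
        enn_root p (ennreal (1 / mleb B) *
           (\<integral>\<^sup>+ x\<in>B. ennreal (\<bar>f x - heat P (tB B) f x\<bar> powr p) \<partial>lborel)) \<le> ennreal C * ennreal M"
        using ball_bound[OF Cg A r meas gb conserv, of x0] unfolding B WW C_def by simp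
    qed
  qed
qed


end
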